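(* Let $n\ge1$ and let $\epsilon_{ij}\in\{0,1\}$ be given for all $1\le i,j\le n$ with $|i-j|\le 1$. Let $w$ be the number of pairs $(u,v)\in\{0,1\}^n\times\{0,1\}^n$ such that $\epsilon_{ij}=\delta_{u_i,v_j}$ for all $1\le i,j\le n$ with $|i-j|\le1$ (where $\delta$ is the Kronecker delta). If \[ \epsilon_{i-1,i-1}+\epsilon_{i,i-1}+\epsilon_{i-1,i}+\epsilon_{i,i}\in\{0,2,4\}\quad\text{for all } i\in\{2,\dots,n\}, \] then $w=2$; otherwise $w=0$.
   Context: In the paper, such a family $(\epsilon_{ij})$ is called a "string realizable configuration of weight $w$", with $w$ as defined in the claim, for the alphabet $\Sigma=\{0,1\}$ (the case $k=2$, $r=1$). *)

theory Defs
  imports Main "HOL-Library.FuncSet"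
begin

definition kdelta :: "bool \<Rightarrow> bool \<Rightarrow> nat" where
  "kdelta a b = (if a = b then 1 else 0)"

definition weight :: "nat \<Rightarrow> (nat \<Rightarrow> nat \<Rightarrow> nat) \<Rightarrow> nat" where
  "weight n eps = card {(u, v). u \<in> {1..n} \<rightarrow>\<^sub>E (UNIV :: bool set) \<and>
      v \<in> {1..n} \<rightarrow>\<^sub>E (UNIV :: bool set) \<and>
      (\<forall>i\<in>{1..n}. \<forall>j\<in>{1..n}. (i \<le> j + 1 \<and> j \<le> i + 1) \<longrightarrow> eps i j = kdelta (u i) (v j))}"

end

theory Submission
  imports Defs
begin

fun gg :: "(nat \<Rightarrow> nat \<Rightarrow> nat) \<Rightarrow> nat \<Rightarrow> bool" where
  "gg e 0 = True"
| "gg e (Suc 0) = True"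
| "gg e (Suc (Suc i)) = ((gg e (Suc i) = (e (Suc i) (Suc i) = 1)) = (e (Suc (Suc i)) (Suc i) = 1))"

lemma gg_step: "i \<ge> 1 \<Longrightarrow> gg e (Suc i) = ((gg e i = (e i i = 1)) = (e (Suc i) i = 1))"
  by (cases i) auto

lemma par:
  fixes a b c d :: nat
  assumes "a = 0 \<or> a = 1" "b = 0 \<or> b = 1" "c = 0 \<or> c = 1" "d = 0 \<or> d = 1"
    "a + b + c + d \<in> {0, 2, 4}"
  shows "c = kdelta x (((x = (a = 1)) = (b = 1)) = (d = 1))"
  using assms unfolding kdelta_def by (cases x) (elim disjE; simp)+

definition PP :: "nat \<Rightarrow> (nat \<Rightarrow> nat \<Rightarrow> nat) \<Rightarrow> (nat \<Rightarrow> bool) \<Rightarrow> (nat \<Rightarrow> bool) \<Rightarrow> bool" where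
  "PP n eps u v \<longleftrightarrow> (\<forall>i\<in>{1..n}. \<forall>j\<in>{1..n}. (i \<le> j + 1 \<and> j \<le> i + 1) \<longrightarrow> eps i j = kdelta (u i) (v j))"

lemma forward:
  assumes "PP n eps u v" "i \<in> {2..n}"
  shows "eps (i - 1) (i - 1) + eps i (i - 1) + eps (i - 1) i + eps i i \<in> {0, 2, 4}"
proof -
  obtain k where k: "i = Suc k" "k \<ge> 1" using assms(2) by (cases i) auto
  have "eps k k = kdelta (u k) (v k)" "eps (Suc k) k = kdelta (u (Suc k)) (v k)"
       "eps k (Suc k) = kdelta (u k) (v (Suc k))" "eps (Suc k) (Suc k) = kdelta (u (Suc k)) (v (Suc k))"
    using assms k unfolding PP_def by auto
  then show ?thesis unfolding kdelta_def k
    by (cases "u k"; cases "u (Suc k)"; cases "v k"; cases "v (Suc k)") auto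
qed
lemma PPD: "PP n eps u v \<Longrightarrow> 1 \<le> i \<Longrightarrow> i \<le> n \<Longrightarrow> 1 \<le> j \<Longrightarrow> j \<le> n \<Longrightarrow> i \<le> j + 1 \<Longrightarrow> j \<le> i + 1
  \<Longrightarrow> eps i j = kdelta (u i) (v j)"
  unfolding PP_def by simp

lemma kd_inj: "kdelta a b = kdelta a b' \<Longrightarrow> b = b'" "kdelta a b = kdelta a' b \<Longrightarrow> a = a'"
  unfolding kdelta_def by (auto split: if_splits)

lemma uniq:
  assumes "PP n eps u v" "PP n eps u' v'" "u 1 = u' 1"
  shows "1 \<le> i \<Longrightarrow> i \<le> n \<Longrightarrow> u i = u' i \<and> v i = v' i"
proof (induction i rule: nat_induct_at_least)
  case base
  have "kdelta (u 1) (v 1) = kdelta (u 1) (v' 1)"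
    using PPD[OF assms(1), of 1 1] PPD[OF assms(2), of 1 1] assms(3) base by simp
  then show ?case using assms(3) kd_inj by blast
next
  case (Suc i)
  then have IH: "u i = u' i \<and> v i = v' i" by simp
  have "kdelta (u (Suc i)) (v i) = kdelta (u' (Suc i)) (v i)"
    using PPD[OF assms(1), of "Suc i" i] PPD[OF assms(2), of "Suc i" i] IH Suc by simp
  then have a: "u (Suc i) = u' (Suc i)" using kd_inj by blast
  have "kdelta (u (Suc i)) (v (Suc i)) = kdelta (u (Suc i)) (v' (Suc i))"
    using PPD[OF assms(1), of "Suc i" "Suc i"] PPD[OF assms(2), of "Suc i" "Suc i"] a Suc by simp
  then show ?case using a kd_inj by blast
qed

theorem mainTheorem2:
  fixes n :: nat and eps :: "nat \<Rightarrow> nat \<Rightarrow> nat"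
  assumes "n \<ge> 1"
    and "\<forall>i\<in>{1..n}. \<forall>j\<in>{1..n}. (i \<le> j + 1 \<and> j \<le> i + 1) \<longrightarrow> eps i j \<in> {0, 1}"
  shows "weight n eps =
    (if \<forall>i\<in>{2..n}. eps (i - 1) (i - 1) + eps i (i - 1) + eps (i - 1) i + eps i i \<in> {0, 2, 4}
     then 2 else 0)"
proof -
  define S where "S = {(u, v). u \<in> {1..n} \<rightarrow>\<^sub>E (UNIV :: bool set) \<and>
      v \<in> {1..n} \<rightarrow>\<^sub>E (UNIV :: bool set) \<and> PP n eps u v}"
  have W: "weight n eps = card S" unfolding weight_def S_def PP_def by simp
  show ?thesis
  proof (cases "\<forall>i\<in>{2..n}. eps (i - 1) (i - 1) + eps i (i - 1) + eps (i - 1) i + eps i i \<in> {0, 2, 4}")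
    case False
    have "S = {}" using False forward unfolding S_def by blast
    then show ?thesis using W False by simp
  next
    case True
    define u where "u = restrict (gg eps) {1..n}"
    define v where "v = restrict (\<lambda>i. gg eps i = (eps i i = 1)) {1..n}"
    define u2 where "u2 = restrict (\<lambda>i. \<not> u i) {1..n}"
    define v2 where "v2 = restrict (\<lambda>i. \<not> v i) {1..n}"
    have P1: "PP n eps u v"
      unfolding PP_def
    proof (intro ballI impI)
      fix i j assume i: "i \<in> {1..n}" and j: "j \<in> {1..n}" and ij: "i \<le> j + 1 \<and> j \<le> i + 1"
      have e01: "\<And>a b. a \<in> {1..n} \<Longrightarrow> b \<in> {1..n} \<Longrightarrow> a \<le> b + 1 \<and> b \<le> a + 1 \<Longrightarrow> eps a b = 0 \<or> eps a b = 1"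
        using assms(2) by auto
      consider "j = i" | "i = Suc j" | "j = Suc i" using ij by linarith
      then show "eps i j = kdelta (u i) (v j)"
      proof cases
        case 1
        then show ?thesis using i e01[OF i i] unfolding u_def v_def kdelta_def by auto
      next
        case 2
        then have "j \<ge> 1" using j by auto
        then show ?thesis using 2 i j e01[OF i j] gg_step[of j eps] unfolding u_def v_def kdelta_def by auto
      next
        case 3
        have i1: "i \<ge> 1" using i by auto
        have si: "Suc i \<in> {2..n}" using j 3 i1 by auto
        have T: "eps i i + eps (Suc i) i + eps i (Suc i) + eps (Suc i) (Suc i) \<in> {0, 2, 4}"
          using bspec[OF True si] by simp
        have ui: "u i = gg eps i" using i unfolding u_def by simp
        have vi: "v (Suc i) = (gg eps (Suc i) = (eps (Suc i) (Suc i) = 1))" using j 3 unfolding v_def by simp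
        have "eps i i = 0 \<or> eps i i = 1" using e01[OF i i] by simp
        moreover have "eps (Suc i) i = 0 \<or> eps (Suc i) i = 1" using e01[of "Suc i" i] i j 3 by auto
        moreover have "eps i (Suc i) = 0 \<or> eps i (Suc i) = 1" using e01[of i "Suc i"] i j 3 by auto
        moreover have "eps (Suc i) (Suc i) = 0 \<or> eps (Suc i) (Suc i) = 1" using e01[of "Suc i" "Suc i"] i j 3 by auto
        ultimately have "eps i (Suc i) = kdelta (gg eps i) (((gg eps i = (eps i i = 1)) = (eps (Suc i) i = 1)) = (eps (Suc i) (Suc i) = 1))"
          using T by (intro par) auto
        then show ?thesis using 3 ui vi gg_step[OF i1, of eps] by simp
      qed
    qed
    have P2: "PP n eps u2 v2" using P1 unfolding PP_def u2_def v2_def kdelta_def by auto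
    have mem1: "(u, v) \<in> S" using P1 unfolding S_def u_def v_def by auto
    have mem2: "(u2, v2) \<in> S" using P2 unfolding S_def u2_def v2_def by auto
    have "u2 1 \<noteq> u 1" using assms(1) unfolding u2_def by simp
    then have ne: "(u, v) \<noteq> (u2, v2)" by auto
    have "S \<subseteq> {(u, v), (u2, v2)}"
    proof
      fix p assume p: "p \<in> S"
      obtain a b where ab: "p = (a, b)" by fastforce
      have ext: "a \<in> {1..n} \<rightarrow>\<^sub>E (UNIV :: bool set)" "b \<in> {1..n} \<rightarrow>\<^sub>E (UNIV :: bool set)" "PP n eps a b"
        using p ab unfolding S_def by auto
      have extu: "u \<in> {1..n} \<rightarrow>\<^sub>E (UNIV :: bool set)" "v \<in> {1..n} \<rightarrow>\<^sub>E (UNIV :: bool set)"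
        "u2 \<in> {1..n} \<rightarrow>\<^sub>E (UNIV :: bool set)" "v2 \<in> {1..n} \<rightarrow>\<^sub>E (UNIV :: bool set)"
        using mem1 mem2 unfolding S_def by auto
      show "p \<in> {(u, v), (u2, v2)}"
      proof (cases "a 1 = u 1")
        case True
        have "\<forall>i\<in>{1..n}. a i = u i \<and> b i = v i" using uniq[OF ext(3) P1 True] by auto
        then have "a = u" "b = v" using ext extu by (auto simp: PiE_iff intro!: extensionalityI[of _ "{1..n}"])
        then show ?thesis using ab by simp
      next
        case False
        then have F: "a 1 = u2 1" using assms(1) unfolding u2_def by auto
        have "\<forall>i\<in>{1..n}. a i = u2 i \<and> b i = v2 i" using uniq[OF ext(3) P2 F] by auto
        then have "a = u2" "b = v2" using ext extu by (auto simp: PiE_iff intro!: extensionalityI[of _ "{1..n}"])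
        then show ?thesis using ab by simp
      qed
    qed
    then have "S = {(u, v), (u2, v2)}" using mem1 mem2 by auto
    then show ?thesis using W ne True by simp
  qed
qed

end
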